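(* Let $G$ be a graph with $m$ edges and $n^+$ positive adjacency eigenvalues. For every integer $k$ with $1\le k\le n^+$, \[6\,t(G)\ \ge\ \frac{1}{\sqrt{k}}\,\big(s_k\big)^{3/2}-\big(2m-s_k\big)^{3/2}.\]
   Context: For a simple graph $G$ on $n$ vertices and $m$ edges, let $\lambda_1\ge\cdots\ge\lambda_n$ be the eigenvalues of its adjacency matrix; $n^+$ is the number of positive eigenvalues. $t(G)$ denotes the number of triangles in $G$, and $s_k=\sum_{i=1}^k\lambda_i^2$. *)

theory Defs
  imports "Jordan_Normal_Form.Char_Poly"
begin

text \<open>A simple graph on the vertex set {0..<n}, given by a symmetric irreflexive
adjacency relation E (only its restriction to {0..<n} matters).\<close>
definition simple_graph :: "nat \<Rightarrow> (nat \<Rightarrow> nat \<Rightarrow> bool) \<Rightarrow> bool" where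
  "simple_graph n E \<longleftrightarrow> (\<forall>i<n. \<forall>j<n. E i j \<longleftrightarrow> E j i) \<and> (\<forall>i<n. \<not> E i i)"

definition adj_matrix :: "nat \<Rightarrow> (nat \<Rightarrow> nat \<Rightarrow> bool) \<Rightarrow> real mat" where
  "adj_matrix n E = mat n n (\<lambda>(i,j). if E i j then 1 else 0)"

definition num_edges :: "nat \<Rightarrow> (nat \<Rightarrow> nat \<Rightarrow> bool) \<Rightarrow> nat" where
  "num_edges n E = card {{i,j} | i j. i < n \<and> j < n \<and> E i j}"

definition num_triangles :: "nat \<Rightarrow> (nat \<Rightarrow> nat \<Rightarrow> bool) \<Rightarrow> nat" where
  "num_triangles n E = card {{i,j,l} | i j l. i < n \<and> j < n \<and> l < n \<and> E i j \<and> E j l \<and> E i l}"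

text \<open>The eigenvalues lambda_1 >= ... >= lambda_n of a real matrix whose characteristic
polynomial splits over the reals (as is the case for symmetric matrices), listed with
algebraic multiplicity in non-increasing order.\<close>
definition eigenvalues_desc :: "real mat \<Rightarrow> real list" where
  "eigenvalues_desc A = (THE xs. sorted_wrt (\<ge>) xs \<and>
      char_poly A = prod_list (map (\<lambda>x. [:- x, 1:]) xs))"

definition graph_eigs :: "nat \<Rightarrow> (nat \<Rightarrow> nat \<Rightarrow> bool) \<Rightarrow> real list" where
  "graph_eigs n E = eigenvalues_desc (adj_matrix n E)"

definition n_plus :: "nat \<Rightarrow> (nat \<Rightarrow> nat \<Rightarrow> bool) \<Rightarrow> nat" where
  "n_plus n E = length (filter (\<lambda>x. x > 0) (graph_eigs n E))"

definition s_k :: "nat \<Rightarrow> (nat \<Rightarrow> nat \<Rightarrow> bool) \<Rightarrow> nat \<Rightarrow> real" where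
  "s_k n E k = (\<Sum>i<k. (graph_eigs n E ! i)^2)"

end

theory Submission
  imports Defs Jordan_Normal_Form.Schur_Decomposition
begin


lemma cs1:
  fixes a :: "nat \<Rightarrow> real"
  assumes "\<And>i. i \<in> I \<Longrightarrow> a i \<ge> 0"
  shows "(\<Sum>i\<in>I. a i^2)^2 \<le> (\<Sum>i\<in>I. a i^3) * (\<Sum>i\<in>I. a i)"
proof -
  have e: "\<And>i j. a i * a j * (a i - a j)^2 = a i^3 * a j - 2*(a i^2 * a j^2) + a j^3 * a i"
    by (simp add: power2_eq_square power3_eq_cube algebra_simps)
  have "0 \<le> (\<Sum>i\<in>I. \<Sum>j\<in>I. a i * a j * (a i - a j)^2)"
    using assms by (intro sum_nonneg mult_nonneg_nonneg) auto
  also have "\<dots> = (\<Sum>i\<in>I. \<Sum>j\<in>I. a i^3 * a j) - 2 * (\<Sum>i\<in>I. \<Sum>j\<in>I. a i^2 * a j^2) + (\<Sum>i\<in>I. \<Sum>j\<in>I. a j^3 * a i)"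
    unfolding e by (simp add: sum.distrib sum_subtractf sum_distrib_left)
  also have "\<dots> = 2 * ((\<Sum>i\<in>I. a i^3) * (\<Sum>i\<in>I. a i)) - 2 * (\<Sum>i\<in>I. a i^2)^2"
  proof -
    have 1: "(\<Sum>i\<in>I. \<Sum>j\<in>I. a i^3 * a j) = (\<Sum>i\<in>I. a i^3) * (\<Sum>i\<in>I. a i)"
      by (simp only: sum_product)
    have 2: "(\<Sum>i\<in>I. \<Sum>j\<in>I. a j^3 * a i) = (\<Sum>i\<in>I. a i^3) * (\<Sum>i\<in>I. a i)"
      by (simp only: sum_product mult.commute)
    have 3: "(\<Sum>i\<in>I. \<Sum>j\<in>I. a i^2 * a j^2) = (\<Sum>i\<in>I. a i^2)^2"
      by (simp only: sum_product power2_eq_square[of "sum _ _"])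
    show ?thesis unfolding 1 2 3 by simp
  qed
  finally show ?thesis by simp
qed

lemma cs2:
  fixes a :: "nat \<Rightarrow> real"
  shows "(\<Sum>i\<in>I. a i)^2 \<le> real (card I) * (\<Sum>i\<in>I. a i^2)"
proof -
  have e: "\<And>i j. (a i - a j)^2 = a i^2 - 2*(a i * a j) + a j^2"
    by (simp add: power2_eq_square algebra_simps)
  have "0 \<le> (\<Sum>i\<in>I. \<Sum>j\<in>I. (a i - a j)^2)"
    by (intro sum_nonneg) auto
  also have "\<dots> = (\<Sum>i\<in>I. \<Sum>j\<in>I. a i^2) - 2 * (\<Sum>i\<in>I. \<Sum>j\<in>I. a i * a j) + (\<Sum>i\<in>I. \<Sum>j\<in>I. a j^2)"
    unfolding e by (simp add: sum.distrib sum_subtractf sum_distrib_left)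
  also have "\<dots> = 2 * (real (card I) * (\<Sum>i\<in>I. a i^2)) - 2 * (\<Sum>i\<in>I. a i)^2"
  proof -
    have 1: "(\<Sum>i\<in>I. \<Sum>j\<in>I. a i^2) = real (card I) * (\<Sum>i\<in>I. a i^2)"
      by (simp add: sum_distrib_left[symmetric] mult.commute)
    have 2: "(\<Sum>i\<in>I. \<Sum>j\<in>I. a j^2) = real (card I) * (\<Sum>i\<in>I. a i^2)"
      by simp
    have 3: "(\<Sum>i\<in>I. \<Sum>j\<in>I. a i * a j) = (\<Sum>i\<in>I. a i)^2"
      by (simp only: sum_product power2_eq_square[of "sum _ _"])
    show ?thesis unfolding 1 2 3 by simp
  qed
  finally show ?thesis by simp
qed

lemma powr32: "(x::real) \<ge> 0 \<Longrightarrow> x powr (3/2) = x * sqrt x"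
proof (cases "x = 0")
  case False
  assume "x \<ge> 0"
  hence "x > 0" using False by simp
  have "x powr (3/2) = x powr (1 + 1/2)" by simp
  also have "\<dots> = x powr 1 * x powr (1/2)" by (rule powr_add)
  also have "\<dots> = x * x powr (1/2)" using \<open>x>0\<close> by simp
  finally show ?thesis by (simp add: powr_half_sqrt \<open>x \<ge> 0\<close>)
qed simp

lemma pos_part:
  fixes a :: "nat \<Rightarrow> real"
  assumes "\<And>i. i \<in> I \<Longrightarrow> a i \<ge> 0" and "finite I" and "I \<noteq> {}"
  shows "(1 / sqrt (real (card I))) * (\<Sum>i\<in>I. a i^2) powr (3/2) \<le> (\<Sum>i\<in>I. a i^3)"
proof -
  define S where "S = (\<Sum>i\<in>I. a i^2)"
  define T where "T = (\<Sum>i\<in>I. a i^3)"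
  define U where "U = (\<Sum>i\<in>I. a i)"
  define k where "k = real (card I)"
  have k: "k > 0" using assms unfolding k_def by (simp add: card_gt_0_iff)
  have S0: "S \<ge> 0" unfolding S_def by (intro sum_nonneg) auto
  have T0: "T \<ge> 0" unfolding T_def using assms by (intro sum_nonneg) auto
  have U0: "U \<ge> 0" unfolding U_def using assms by (intro sum_nonneg) auto
  have h1: "S^2 \<le> T * U" unfolding S_def T_def U_def by (rule cs1) (use assms in auto)
  have h2: "U^2 \<le> k * S" unfolding S_def U_def k_def by (rule cs2)
  have "S^4 \<le> T^2 * U^2"
  proof -
    have "S^4 = (S^2)^2" by simp
    also have "\<dots> \<le> (T*U)^2" using h1 S0 by (intro power_mono) auto
    finally show ?thesis by (simp add: power_mult_distrib)
  qed
  also have "\<dots> \<le> T^2 * (k * S)" using h2 by (intro mult_left_mono) auto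
  finally have h3: "S^4 \<le> T^2 * k * S" by simp
  have h4: "S^3 \<le> k * T^2"
  proof (cases "S = 0")
    case True thus ?thesis using k by simp
  next
    case False
    hence "S > 0" using S0 by simp
    have "S^3 * S \<le> (k * T^2) * S" using h3 by (simp add: power_Suc algebra_simps power3_eq_cube power4_eq_xxxx)
    thus ?thesis using \<open>S>0\<close> by simp
  qed
  have "S powr (3/2) = sqrt (S^3)" using S0 by (simp add: powr32 real_sqrt_mult power3_eq_cube)
  also have "\<dots> \<le> sqrt (k * T^2)" using h4 by simp
  also have "\<dots> = sqrt k * T" using T0 by (simp add: real_sqrt_mult)
  finally have "S powr (3/2) \<le> sqrt k * T" .
  hence "S powr (3/2) / sqrt k \<le> T" using k by (simp add: divide_le_eq mult.commute)
  thus ?thesis unfolding S_def T_def k_def by simp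
qed

lemma neg_part:
  fixes a :: "nat \<Rightarrow> real"
  assumes "finite I"
  shows "- ((\<Sum>i\<in>I. a i^2) powr (3/2)) \<le> (\<Sum>i\<in>I. a i^3)"
proof -
  define R where "R = (\<Sum>i\<in>I. a i^2)"
  have R0: "R \<ge> 0" unfolding R_def by (intro sum_nonneg) auto
  have bound: "\<bar>a i\<bar> \<le> sqrt R" if "i \<in> I" for i
  proof -
    have "a i^2 \<le> R" unfolding R_def using assms that
      by (intro member_le_sum) auto
    thus ?thesis using real_sqrt_le_mono by fastforce
  qed
  have each: "- (sqrt R * a i^2) \<le> a i^3" if "i \<in> I" for i
  proof (cases "a i \<ge> 0")
    case True
    have "0 \<le> a i^3" using True by simp
    moreover have "0 \<le> sqrt R * a i^2" using R0 by simp
    ultimately show ?thesis by linarith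
  next
    case False
    have "a i^3 = - (\<bar>a i\<bar> * a i^2)" using False by (simp add: power2_eq_square power3_eq_cube)
    moreover have "\<bar>a i\<bar> * a i^2 \<le> sqrt R * a i^2" using bound[OF that] by (intro mult_right_mono) auto
    ultimately show ?thesis by simp
  qed
  have "R * sqrt R = (\<Sum>i\<in>I. a i^2 * sqrt R)" unfolding R_def by (rule sum_distrib_right)
  hence "- (R powr (3/2)) = (\<Sum>i\<in>I. - (sqrt R * a i^2))"
    using R0 by (simp add: powr32 sum_negf mult.commute)
  also have "\<dots> \<le> (\<Sum>i\<in>I. a i^3)" using each by (rule sum_mono)
  finally show ?thesis unfolding R_def .
qed


definition mtr :: "'a::comm_ring_1 mat \<Rightarrow> 'a" where
  "mtr M = (\<Sum>i<dim_row M. M $$ (i,i))"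

lemma mtr_comm:
  fixes X Y :: "'a::comm_ring_1 mat"
  assumes X: "X \<in> carrier_mat n m" and Y: "Y \<in> carrier_mat m n"
  shows "mtr (X * Y) = mtr (Y * X)"
proof -
  have "mtr (X * Y) = (\<Sum>i<n. \<Sum>j<m. X $$ (i,j) * Y $$ (j,i))"
    unfolding mtr_def using X Y by (simp add: scalar_prod_def row_def col_def lessThan_atLeast0)
  also have "\<dots> = (\<Sum>j<m. \<Sum>i<n. Y $$ (j,i) * X $$ (i,j))"
    by (subst sum.swap) (simp add: mult.commute)
  also have "\<dots> = mtr (Y * X)"
    unfolding mtr_def using X Y by (simp add: scalar_prod_def row_def col_def lessThan_atLeast0)
  finally show ?thesis .
qed

lemma ut_mult:
  fixes C D :: "'a::comm_ring_1 mat"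
  assumes C: "C \<in> carrier_mat n n" and D: "D \<in> carrier_mat n n"
    and uC: "upper_triangular C" and uD: "upper_triangular D"
  shows "upper_triangular (C * D) \<and> (\<forall>i<n. (C * D) $$ (i,i) = C $$ (i,i) * D $$ (i,i))"
proof (intro conjI allI impI)
  have e: "(C * D) $$ (i,j) = (\<Sum>l<n. C $$ (i,l) * D $$ (l,j))" if "i < n" "j < n" for i j
    using that C D by (simp add: scalar_prod_def row_def col_def lessThan_atLeast0)
  show "upper_triangular (C * D)"
  proof (rule upper_triangularI)
    fix i j assume ji: "j < i" and i: "i < dim_row (C * D)"
    hence i': "i < n" using C by simp
    have "(C * D) $$ (i,j) = (\<Sum>l<n. C $$ (i,l) * D $$ (l,j))" using e i' ji by simp
    also have "\<dots> = 0"
    proof (intro sum.neutral ballI)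
      fix l assume l: "l \<in> {..<n}"
      show "C $$ (i,l) * D $$ (l,j) = 0"
      proof (cases "l < i")
        case True
        have "C $$ (i,l) = 0" using upper_triangularD[OF uC True] C i' by simp
        thus ?thesis by simp
      next
        case False
        hence "j < l" using ji by simp
        moreover have "l < n" using l by simp
        ultimately have "D $$ (l,j) = 0" using upper_triangularD[OF uD] D by simp
        thus ?thesis by simp
      qed
    qed
    finally show "(C * D) $$ (i,j) = 0" .
  qed
  fix i assume i: "i < n"
  have "(C * D) $$ (i,i) = (\<Sum>l<n. C $$ (i,l) * D $$ (l,i))" using e i by simp
  also have "\<dots> = (\<Sum>l<n. if l = i then C $$ (i,i) * D $$ (i,i) else 0)"
  proof (intro sum.cong refl)
    fix l assume l: "l \<in> {..<n}"
    show "C $$ (i,l) * D $$ (l,i) = (if l = i then C $$ (i,i) * D $$ (i,i) else 0)"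
    proof (cases "l < i")
      case True
      have "C $$ (i,l) = 0" using upper_triangularD[OF uC True] C i by simp
      thus ?thesis using True by simp
    next
      case False
      show ?thesis
      proof (cases "l = i")
        case False
        hence "i < l" using \<open>\<not> l < i\<close> by simp
        moreover have "l < n" using l by simp
        ultimately have "D $$ (l,i) = 0" using upper_triangularD[OF uD] D by simp
        thus ?thesis using False by simp
      qed simp
    qed
  qed
  also have "\<dots> = C $$ (i,i) * D $$ (i,i)" using i by simp
  finally show "(C * D) $$ (i,i) = C $$ (i,i) * D $$ (i,i)" .
qed

lemma ut_pow:
  fixes B :: "'a::comm_ring_1 mat"
  assumes B: "B \<in> carrier_mat n n" and uB: "upper_triangular B"
  shows "upper_triangular (B ^\<^sub>m k) \<and> (\<forall>i<n. (B ^\<^sub>m k) $$ (i,i) = B $$ (i,i) ^ k)"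
proof (induction k)
  case 0
  then show ?case using B by auto
next
  case (Suc k)
  have Bk: "B ^\<^sub>m k \<in> carrier_mat n n" using B by simp
  from ut_mult[OF Bk B _ uB] Suc show ?case by auto
qed

lemma trace_pow_eig:
  fixes A :: "real mat"
  assumes A: "A \<in> carrier_mat n n"
    and cp: "char_poly A = prod_list (map (\<lambda>x. [:- x, 1:]) xs)"
  shows "length xs = n \<and> mtr (A ^\<^sub>m k) = (\<Sum>i<n. (xs ! i) ^ k)"
proof -
  obtain B P Q where sd: "schur_decomposition A xs = (B,P,Q)" by (cases "schur_decomposition A xs") auto
  from schur_decomposition[OF A cp sd] have sim: "similar_mat_wit A B P Q"
    and uB: "upper_triangular B" and dB: "diag_mat B = xs" by auto
  from sim A have B: "B \<in> carrier_mat n n" and P: "P \<in> carrier_mat n n" and Q: "Q \<in> carrier_mat n n"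
    and QP: "Q * P = 1\<^sub>m n"
    unfolding similar_mat_wit_def Let_def by auto
  have pw: "A ^\<^sub>m k = P * B ^\<^sub>m k * Q" by (rule similar_mat_wit_pow_id[OF sim])
  have Bk: "B ^\<^sub>m k \<in> carrier_mat n n" using B by simp
  have len: "length xs = n" using dB B unfolding diag_mat_def by auto
  have xi: "xs ! i = B $$ (i,i)" if "i < n" for i using dB B that unfolding diag_mat_def by auto
  have "mtr (A ^\<^sub>m k) = mtr ((P * B ^\<^sub>m k) * Q)" using pw by simp
  also have "\<dots> = mtr (Q * (P * B ^\<^sub>m k))" by (rule mtr_comm[of _ n n]) (use P Bk Q in auto)
  also have "Q * (P * B ^\<^sub>m k) = (Q * P) * B ^\<^sub>m k" using P Bk Q by (simp add: assoc_mult_mat)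
  also have "\<dots> = B ^\<^sub>m k" using QP Bk by (simp add: left_mult_one_mat)
  also have "mtr (B ^\<^sub>m k) = (\<Sum>i<n. (xs ! i) ^ k)"
    unfolding mtr_def using ut_pow[OF B uB, of k] Bk xi B by simp
  finally show ?thesis using len by simp
qed



lemma card_fibres:
  assumes fin: "finite A" and c: "\<And>x. x \<in> A \<Longrightarrow> card {y\<in>A. f y = f x} = c"
  shows "card A = c * card (f ` A)"
proof -
  have "A = (\<Union>b\<in>f ` A. {y\<in>A. f y = b})" by auto
  hence "card A = card (\<Union>b\<in>f ` A. {y\<in>A. f y = b})" by simp
  also have "\<dots> = (\<Sum>b\<in>f ` A. card {y\<in>A. f y = b})"
    using fin by (intro card_UN_disjoint) auto
  also have "\<dots> = (\<Sum>b\<in>f ` A. c)"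
    by (intro sum.cong refl) (auto simp: c)
  finally show ?thesis by simp
qed

lemma sum_ind_card:
  assumes "finite S"
  shows "(\<Sum>x\<in>S. if P x then 1 else 0 :: real) = real (card {x\<in>S. P x})"
  using assms by (simp add: sum.If_cases Int_def)

lemma edges_count:
  assumes sg: "simple_graph n E"
  shows "card {(i,j). i < n \<and> j < n \<and> E i j} = 2 * num_edges n E"
proof -
  let ?P = "{(i,j). i < n \<and> j < n \<and> E i j}"
  let ?f = "\<lambda>(i,j). {i,j} :: nat set"
  have fin: "finite ?P" by (rule finite_subset[of _ "{..<n} \<times> {..<n}"]) auto
  have img: "{{i,j} | i j. i < n \<and> j < n \<and> E i j} = ?f ` ?P" by auto
  have "card ?P = 2 * card (?f ` ?P)"
  proof (rule card_fibres[OF fin])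
    fix x assume x: "x \<in> ?P"
    obtain a b where ab: "x = (a,b)" by (cases x)
    have a: "a < n" "b < n" "E a b" using x ab by auto
    have "a \<noteq> b" using a sg unfolding simple_graph_def by auto
    have "E b a" using a sg unfolding simple_graph_def by auto
    have "{y \<in> ?P. ?f y = ?f x} = {(a,b),(b,a)}"
      using a \<open>E b a\<close> \<open>a \<noteq> b\<close> ab by (auto simp: doubleton_eq_iff)
    thus "card {y \<in> ?P. ?f y = ?f x} = 2" using \<open>a \<noteq> b\<close> by simp
  qed
  thus ?thesis unfolding num_edges_def img .
qed

lemma triangles_count:
  assumes sg: "simple_graph n E"
  shows "card {(i,j,l). i < n \<and> j < n \<and> l < n \<and> E i j \<and> E j l \<and> E i l} = 6 * num_triangles n E"
proof -
  let ?T = "{(i,j,l). i < n \<and> j < n \<and> l < n \<and> E i j \<and> E j l \<and> E i l}"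
  let ?f = "\<lambda>(i,j,l). {i,j,l} :: nat set"
  have fin: "finite ?T" by (rule finite_subset[of _ "{..<n} \<times> {..<n} \<times> {..<n}"]) auto
  have img: "{{i,j,l} | i j l. i < n \<and> j < n \<and> l < n \<and> E i j \<and> E j l \<and> E i l} = ?f ` ?T"
    by auto
  have symE: "\<And>i j. i < n \<Longrightarrow> j < n \<Longrightarrow> E i j \<Longrightarrow> E j i" and irr: "\<And>i. i < n \<Longrightarrow> \<not> E i i"
    using sg unfolding simple_graph_def by auto
  have "card ?T = 6 * card (?f ` ?T)"
  proof (rule card_fibres[OF fin])
    fix x assume x: "x \<in> ?T"
    obtain a b c where abc: "x = (a,b,c)" by (cases x) auto
    have a: "a < n" "b < n" "c < n" "E a b" "E b c" "E a c" using x abc by auto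
    have d: "a \<noteq> b" "b \<noteq> c" "a \<noteq> c" using a irr by auto
    have "{y \<in> ?T. ?f y = ?f x} = {(a,b,c),(a,c,b),(b,a,c),(b,c,a),(c,a,b),(c,b,a)}"
    proof
      show "{y \<in> ?T. ?f y = ?f x} \<subseteq> {(a,b,c),(a,c,b),(b,a,c),(b,c,a),(c,a,b),(c,b,a)}"
      proof
        fix y assume y: "y \<in> {y \<in> ?T. ?f y = ?f x}"
        obtain p q r where pqr: "y = (p,q,r)" by (cases y) auto
        have yy: "p < n" "q < n" "r < n" "E p q" "E q r" "E p r" "{p,q,r} = {a,b,c}"
          using y pqr abc by auto
        have dd: "p \<noteq> q" "q \<noteq> r" "p \<noteq> r" using yy irr by auto
        have m: "p \<in> {a,b,c}" "q \<in> {a,b,c}" "r \<in> {a,b,c}" using yy(7) by blast+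
        have m2: "a \<in> {p,q,r}" "b \<in> {p,q,r}" "c \<in> {p,q,r}" using yy(7) by blast+
        show "y \<in> {(a,b,c),(a,c,b),(b,a,c),(b,c,a),(c,a,b),(c,b,a)}"
          using m m2 dd d pqr by auto
      qed
    next
      show "{(a,b,c),(a,c,b),(b,a,c),(b,c,a),(c,a,b),(c,b,a)} \<subseteq> {y \<in> ?T. ?f y = ?f x}"
        using a symE abc by (auto simp: insert_commute)
    qed
    thus "card {y \<in> ?T. ?f y = ?f x} = 6" using d by simp
  qed
  thus ?thesis unfolding num_triangles_def img .
qed



lemma mult_idx:
  assumes "X \<in> carrier_mat n m" "Y \<in> carrier_mat m k" "i < n" "j < k"
  shows "(X * Y) $$ (i,j) = (\<Sum>l<m. X $$ (i,l) * Y $$ (l,j))"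
  using assms by (simp add: scalar_prod_def row_def col_def lessThan_atLeast0)

lemma adj_traces:
  assumes sg: "simple_graph n E"
  shows "mtr (adj_matrix n E ^\<^sub>m 2) = 2 * real (num_edges n E)"
    and "mtr (adj_matrix n E ^\<^sub>m 3) = 6 * real (num_triangles n E)"
proof -
  let ?A = "adj_matrix n E"
  have A: "?A \<in> carrier_mat n n" unfolding adj_matrix_def by simp
  have ai: "?A $$ (i,j) = (if E i j then 1 else 0)" if "i < n" "j < n" for i j
    using that unfolding adj_matrix_def by simp
  have symE: "\<And>i j. i < n \<Longrightarrow> j < n \<Longrightarrow> E i j = E j i"
    using sg unfolding simple_graph_def by auto
  have p2: "?A ^\<^sub>m 2 = ?A * ?A" using A by (simp add: numeral_2_eq_2)
  have p3: "?A ^\<^sub>m 3 = (?A * ?A) * ?A" using A by (simp add: numeral_3_eq_3)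
  have AA: "?A * ?A \<in> carrier_mat n n" using A by simp
  have "mtr (?A * ?A) = (\<Sum>i<n. \<Sum>j<n. ?A $$ (i,j) * ?A $$ (j,i))"
    unfolding mtr_def using A by (simp add: scalar_prod_def row_def col_def lessThan_atLeast0)
  also have "\<dots> = (\<Sum>i<n. \<Sum>j<n. if E i j then 1 else 0)"
    by (intro sum.cong refl) (auto simp: ai symE)
  also have "\<dots> = (\<Sum>x\<in>{..<n} \<times> {..<n}. if E (fst x) (snd x) then 1 else 0)"
    by (simp add: sum.cartesian_product case_prod_beta')
  also have "\<dots> = real (card {x\<in>{..<n} \<times> {..<n}. E (fst x) (snd x)})"
    by (rule sum_ind_card) simp
  also have "{x\<in>{..<n} \<times> {..<n}. E (fst x) (snd x)} = {(i,j). i < n \<and> j < n \<and> E i j}"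
    by auto
  finally show "mtr (?A ^\<^sub>m 2) = 2 * real (num_edges n E)"
    unfolding p2 edges_count[OF sg] by simp
  have "mtr ((?A * ?A) * ?A) = (\<Sum>i<n. ((?A * ?A) * ?A) $$ (i,i))"
    unfolding mtr_def using AA A by simp
  also have "\<dots> = (\<Sum>i<n. \<Sum>l<n. (?A * ?A) $$ (i,l) * ?A $$ (l,i))"
    by (intro sum.cong refl mult_idx[OF AA A]) auto
  also have "\<dots> = (\<Sum>i<n. \<Sum>l<n. \<Sum>j<n. ?A $$ (i,j) * ?A $$ (j,l) * ?A $$ (l,i))"
    by (intro sum.cong refl) (simp add: mult_idx[OF A A] sum_distrib_right)
  also have "\<dots> = (\<Sum>i<n. \<Sum>j<n. \<Sum>l<n. ?A $$ (i,j) * ?A $$ (j,l) * ?A $$ (l,i))"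
    by (intro sum.cong refl sum.swap)
  also have "\<dots> = (\<Sum>i<n. \<Sum>j<n. \<Sum>l<n. if E i j \<and> E j l \<and> E i l then 1 else 0)"
    by (intro sum.cong refl) (auto simp: ai symE)
  also have "\<dots> = (\<Sum>x\<in>{..<n} \<times> {..<n} \<times> {..<n}.
        if E (fst x) (fst (snd x)) \<and> E (fst (snd x)) (snd (snd x)) \<and> E (fst x) (snd (snd x)) then 1 else 0)"
    by (simp add: sum.cartesian_product case_prod_beta')
  also have "\<dots> = real (card {x\<in>{..<n} \<times> {..<n} \<times> {..<n}.
        E (fst x) (fst (snd x)) \<and> E (fst (snd x)) (snd (snd x)) \<and> E (fst x) (snd (snd x))})"
    by (rule sum_ind_card) simp
  also have "{x\<in>{..<n} \<times> {..<n} \<times> {..<n}.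
        E (fst x) (fst (snd x)) \<and> E (fst (snd x)) (snd (snd x)) \<and> E (fst x) (snd (snd x))}
      = {(i,j,l). i < n \<and> j < n \<and> l < n \<and> E i j \<and> E j l \<and> E i l}"
    by auto
  finally show "mtr (?A ^\<^sub>m 3) = 6 * real (num_triangles n E)"
    unfolding p3 triangles_count[OF sg] by simp
qed




lemma order_prod_lin:
  "Polynomial.order a (prod_list (map (\<lambda>x. [:- x, 1:]) xs)) = count (mset xs) (a::real)"
proof (induction xs)
  case Nil
  then show ?case by (simp add: order_0I)
next
  case (Cons x xs)
  have nz: "prod_list (map (\<lambda>x. [:- x, 1:]) xs) \<noteq> (0::real poly)"
    by (auto simp: prod_list_zero_iff)
  have "Polynomial.order a ([:- x, 1:] * prod_list (map (\<lambda>x. [:- x, 1:]) xs)) =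
        Polynomial.order a [:- x, 1:] + Polynomial.order a (prod_list (map (\<lambda>x. [:- x, 1:]) xs))"
  proof (rule order_mult)
    have "[:- x, 1:] \<noteq> (0::real poly)" by simp
    thus "[:- x, 1:] * prod_list (map (\<lambda>x. [:- x, 1:]) xs) \<noteq> 0" using nz by (rule no_zero_divisors)
  qed
  moreover have "Polynomial.order a [:- x, 1:] = (if a = x then 1 else 0)"
  proof (cases "a = x")
    case True thus ?thesis using order_power_n_n[of a 1] by simp
  next
    case False
    hence "poly [:-x,1:] a \<noteq> 0" by simp
    hence "Polynomial.order a [:-x,1:] = 0" by (rule order_0I)
    thus ?thesis using False by simp
  qed
  ultimately show ?case using Cons by simp
qed

lemma lin_prod_unique:
  fixes xs ys :: "real list"
  assumes "sorted_wrt (\<ge>) xs" "sorted_wrt (\<ge>) ys"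
    and "prod_list (map (\<lambda>x. [:- x, 1:]) xs) = prod_list (map (\<lambda>x. [:- x, 1:]) ys)"
  shows "xs = ys"
proof -
  have m: "mset xs = mset ys"
    by (rule multiset_eqI) (simp only: order_prod_lin[symmetric] assms(3))
  have s1: "sorted (rev xs)" "sorted (rev ys)" using assms(1,2)
    by (simp_all add: sorted_wrt_rev)
  have "sort (rev ys) = rev xs" by (rule properties_for_sort) (use m s1 in auto)
  moreover have "sort (rev ys) = rev ys" by (rule properties_for_sort) (use s1 in auto)
  ultimately show ?thesis by simp
qed

lemma eigenvalues_desc_eq:
  fixes A :: "real mat" and rs :: "real list"
  assumes "char_poly A = prod_list (map (\<lambda>x. [:- x, 1:]) rs)"
  shows "eigenvalues_desc A = rev (sort rs)
    \<and> char_poly A = prod_list (map (\<lambda>x. [:- x, 1:]) (rev (sort rs)))"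
proof -
  let ?xs = "rev (sort rs)"
  have sx: "sorted_wrt (\<ge>) ?xs" by (simp add: sorted_wrt_rev)
  have "prod_list (map (\<lambda>x. [:- x, 1:]) ?xs) = prod_list (map (\<lambda>x. [:- x, 1:]) rs)"
    by (simp only: prod_mset_prod_list[symmetric] mset_map mset_rev mset_sort)
  hence cp: "char_poly A = prod_list (map (\<lambda>x. [:- x, 1:]) ?xs)" using assms by simp
  have "eigenvalues_desc A = ?xs"
    unfolding eigenvalues_desc_def
  proof (rule the_equality)
    show "sorted_wrt (\<ge>) ?xs \<and> char_poly A = prod_list (map (\<lambda>x. [:- x, 1:]) ?xs)" using sx cp by simp
  next
    fix ys assume ys: "sorted_wrt (\<ge>) ys \<and> char_poly A = prod_list (map (\<lambda>x. [:- x, 1:]) ys)"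
    show "ys = ?xs" using ys cp sx by (intro lin_prod_unique) auto
  qed
  thus ?thesis using cp by simp
qed

lemma map_poly_of_real_inj:
  assumes eq: "map_poly (of_real :: real \<Rightarrow> complex) p = map_poly of_real q"
  shows "p = q"
proof (rule poly_eqI)
  fix i
  have "coeff (map_poly (of_real :: real \<Rightarrow> complex) p) i = coeff (map_poly of_real q) i" using eq by simp
  thus "coeff p i = coeff q i" by (simp add: coeff_map_poly)
qed

lemma sym_real_eig:
  fixes A :: "real mat"
  assumes A: "A \<in> carrier_mat n n"
    and sym: "\<And>i j. i < n \<Longrightarrow> j < n \<Longrightarrow> A $$ (i,j) = A $$ (j,i)"
    and ev: "eigenvector (map_mat complex_of_real A) v a"
  shows "Im a = 0"
proof -
  let ?Ac = "map_mat complex_of_real A"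
  have dA: "dim_row ?Ac = n" "dim_col ?Ac = n" using A by auto
  from ev[unfolded eigenvector_def dA] have v: "v \<in> carrier_vec n" and v0: "v \<noteq> 0\<^sub>v n"
    and Av: "?Ac *\<^sub>v v = a \<cdot>\<^sub>v v" by auto
  have dv: "dim_vec v = n" using v by auto
  have row: "(\<Sum>j<n. of_real (A $$ (i,j)) * v $ j) = a * v $ i" if i: "i < n" for i
  proof -
    have "(?Ac *\<^sub>v v) $ i = (a \<cdot>\<^sub>v v) $ i" using Av by simp
    thus ?thesis using i A dv
      by (simp add: scalar_prod_def row_def lessThan_atLeast0)
  qed
  define s where "s = (\<Sum>i<n. cnj (v $ i) * (\<Sum>j<n. of_real (A $$ (i,j)) * v $ j))"
  define r where "r = (\<Sum>i<n. (cmod (v $ i))^2)"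
  have s1: "s = a * of_real r"
  proof -
    have "s = (\<Sum>i<n. a * (cnj (v $ i) * v $ i))" unfolding s_def
      by (intro sum.cong refl) (simp add: row mult.left_commute)
    also have "\<dots> = a * (\<Sum>i<n. of_real ((cmod (v $ i))^2))"
    proof -
      have cz: "\<And>z. cnj z * z = complex_of_real ((cmod z)^2)" by (metis complex_norm_square mult.commute)
      show ?thesis by (simp only: cz sum_distrib_left)
    qed
    finally show ?thesis unfolding r_def by simp
  qed
  have s2: "cnj s = s"
  proof -
    have "cnj s = (\<Sum>i<n. \<Sum>j<n. of_real (A $$ (i,j)) * v $ i * cnj (v $ j))"
      unfolding s_def by (simp add: sum_distrib_left algebra_simps)
    also have "\<dots> = (\<Sum>j<n. \<Sum>i<n. of_real (A $$ (i,j)) * v $ i * cnj (v $ j))"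
      by (rule sum.swap)
    also have "\<dots> = (\<Sum>j<n. \<Sum>i<n. of_real (A $$ (j,i)) * v $ i * cnj (v $ j))"
      by (intro sum.cong refl) (simp add: sym)
    also have "\<dots> = s"
      unfolding s_def by (simp add: sum_distrib_left algebra_simps)
    finally show ?thesis .
  qed
  have r0: "r > 0"
  proof -
    obtain i where i: "i < n" "v $ i \<noteq> 0"
    proof (rule ccontr)
      assume "\<not> thesis"
      hence "\<forall>i<n. v $ i = 0" using that by blast
      hence "v = 0\<^sub>v n" using dv by (intro eq_vecI) auto
      thus False using v0 by simp
    qed
    have "0 < (cmod (v $ i))^2" using i by simp
    also have "\<dots> \<le> r" unfolding r_def using i by (intro member_le_sum) auto
    finally show ?thesis .
  qed
  have "Im s = 0" using s2 by (metis complex_cnj_cancel_iff complex_cnj_complex_of_real complex_is_Real_iff Reals_cnj_iff)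
  hence "Im a * r = 0" using s1 by simp
  thus ?thesis using r0 by simp
qed


interpretation rp: map_poly_comm_ring_hom "of_real :: real \<Rightarrow> complex" ..
lemma map_poly_of_real_prod:
  "map_poly (of_real :: real \<Rightarrow> complex) (prod_list (map (\<lambda>x. [:- x, 1:]) rs))
   = prod_list (map (\<lambda>x. [:- x, 1:]) (map of_real rs))"
  by (simp add: rp.hom_prod_list o_def)



lemma sym_real_splits:
  fixes A :: "real mat"
  assumes A: "A \<in> carrier_mat n n"
    and symA: "\<And>i j. i < n \<Longrightarrow> j < n \<Longrightarrow> A $$ (i,j) = A $$ (j,i)"
  shows "\<exists>rs. char_poly A = prod_list (map (\<lambda>x. [:- x, 1:]) rs)"
proof -
  let ?Ac = "map_mat complex_of_real A"
  have Ac: "?Ac \<in> carrier_mat n n" using A by auto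
  obtain as where as: "char_poly ?Ac = prod_list (map (\<lambda>x. [:- x, 1:]) as)"
    using char_poly_factorized[OF Ac] by blast
  have im: "Im a = 0" if a: "a \<in> set as" for a
  proof -
    have "[:-a,1:] \<in> set (map (\<lambda>x. [:- x, 1:]) as)" using a by simp
    moreover have "poly [:-a,1:] a = 0" by simp
    ultimately have "poly (char_poly ?Ac) a = 0" unfolding as poly_prod_list_zero_iff by blast
    hence "eigenvalue ?Ac a" using eigenvalue_root_char_poly[OF Ac] by simp
    then obtain v where "eigenvector ?Ac v a" unfolding eigenvalue_def by blast
    thus "Im a = 0" using sym_real_eig[OF A symA] by blast
    qed
  have re: "of_real (Re a) = a" if "a \<in> set as" for a using im[OF that] by (simp add: complex_eq_iff)
  have m: "map of_real (map Re as) = as" unfolding map_map by (rule map_idI) (simp add: re)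
  have "map_poly of_real (char_poly A) = char_poly ?Ac"
    by (rule of_real_hom.char_poly_hom[OF A, symmetric])
  also have "\<dots> = map_poly of_real (prod_list (map (\<lambda>x. [:- x, 1:]) (map Re as)))"
    unfolding as map_poly_of_real_prod m ..
  finally show ?thesis using map_poly_of_real_inj by blast
qed



lemma pos_prefix:
  fixes xs :: "real list"
  assumes s: "sorted_wrt (\<ge>) xs" and i: "i < length (filter (\<lambda>x. x > 0) xs)"
  shows "xs ! i > 0"
proof (rule ccontr)
  assume "\<not> xs ! i > 0"
  have il: "i < length xs" using i length_filter_le[of "\<lambda>x. x > 0" xs] by linarith
  have "{j. j < length xs \<and> xs ! j > 0} \<subseteq> {..<i}"
  proof
    fix j assume j: "j \<in> {j. j < length xs \<and> xs ! j > 0}"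
    show "j \<in> {..<i}"
    proof (rule ccontr)
      assume "j \<notin> {..<i}"
      hence "i \<le> j" by simp
      hence "xs ! j \<le> xs ! i" using s j il
        by (cases "i = j") (auto simp: sorted_wrt_iff_nth_less)
      thus False using j \<open>\<not> xs ! i > 0\<close> by simp
    qed
  qed
  hence "card {j. j < length xs \<and> xs ! j > 0} \<le> i"
    by (metis card_lessThan card_mono finite_lessThan)
  thus False using i by (simp add: length_filter_conv_card)
qed

theorem lemma2p2:
  fixes n :: nat and E :: "nat \<Rightarrow> nat \<Rightarrow> bool" and k :: nat
  assumes "simple_graph n E"
    and "1 \<le> k" and "k \<le> n_plus n E"
  shows "6 * real (num_triangles n E) \<ge>
           (1 / sqrt (real k)) * (s_k n E k) powr (3/2)
           - (2 * real (num_edges n E) - s_k n E k) powr (3/2)"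
proof -
  note sg = assms(1)
  let ?A = "adj_matrix n E"
  have A: "?A \<in> carrier_mat n n" unfolding adj_matrix_def by simp
  have symA: "?A $$ (i,j) = ?A $$ (j,i)" if "i < n" "j < n" for i j
    using that sg unfolding adj_matrix_def simple_graph_def by auto
  obtain rs where rs: "char_poly ?A = prod_list (map (\<lambda>x. [:- x, 1:]) rs)"
    using sym_real_splits[OF A symA] by blast
  define xs where "xs = rev (sort rs)"
  have ge: "graph_eigs n E = xs" and cp: "char_poly ?A = prod_list (map (\<lambda>x. [:- x, 1:]) xs)"
    using eigenvalues_desc_eq[OF rs] unfolding graph_eigs_def xs_def by auto
  have sx: "sorted_wrt (\<ge>) xs" unfolding xs_def by (simp add: sorted_wrt_rev)
  from trace_pow_eig[OF A cp, of 2] adj_traces(1)[OF sg]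
  have len: "length xs = n" and sq: "2 * real (num_edges n E) = (\<Sum>i<n. (xs ! i)^2)" by auto
  from trace_pow_eig[OF A cp, of 3] adj_traces(2)[OF sg]
  have cu: "6 * real (num_triangles n E) = (\<Sum>i<n. (xs ! i)^3)" by auto
  have kp: "k \<le> length (filter (\<lambda>x. x > 0) xs)" using assms(3) unfolding n_plus_def ge .
  hence kn: "k \<le> n" using length_filter_le[of "\<lambda>x. x > 0" xs] len by linarith
  have posi: "xs ! i > 0" if "i < k" for i using pos_prefix[OF sx] that kp by simp
  have sk: "s_k n E k = (\<Sum>i<k. (xs ! i)^2)" unfolding s_k_def ge ..
  have split: "(\<Sum>i<n. f i) = (\<Sum>i<k. f i) + (\<Sum>i\<in>{k..<n}. f i)" for f :: "nat \<Rightarrow> real"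
    using kn by (simp add: lessThan_atLeast0 sum.atLeastLessThan_concat)
  have R: "2 * real (num_edges n E) - s_k n E k = (\<Sum>i\<in>{k..<n}. (xs ! i)^2)"
    unfolding sq sk split[of "\<lambda>i. (xs ! i)^2"] by simp
  have P: "(1 / sqrt (real k)) * (s_k n E k) powr (3/2) \<le> (\<Sum>i<k. (xs ! i)^3)"
  proof -
    have "(1 / sqrt (real (card {..<k}))) * (\<Sum>i<k. (xs ! i)^2) powr (3/2) \<le> (\<Sum>i<k. (xs ! i)^3)"
      by (rule pos_part) (use posi assms(2) in \<open>auto simp: less_imp_le lessThan_empty_iff\<close>)
    thus ?thesis unfolding sk by simp
  qed
  have N: "- ((2 * real (num_edges n E) - s_k n E k) powr (3/2)) \<le> (\<Sum>i\<in>{k..<n}. (xs ! i)^3)"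
    unfolding R by (rule neg_part) simp
  have "6 * real (num_triangles n E) = (\<Sum>i<k. (xs ! i)^3) + (\<Sum>i\<in>{k..<n}. (xs ! i)^3)"
    unfolding cu split[of "\<lambda>i. (xs ! i)^3"] ..
  thus ?thesis using P N by linarith
qed

end
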